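(* Let $(\mathfrak{A},\mathfrak{A}_0)$ be a CQ*-algebra as in the context, let $H=H^*\in\mathfrak{A}$ and $\omega\in E(\mathfrak{A}_0)$, and suppose $\overline{\omega}$ is a nondegenerate ground state of $H$ with eigenvalue $\alpha_*$. Then the following are equivalent: (i) $\overline{\omega}$ is a gapped ground state of $H$; (ii) there exists $\Delta>0$ such that $-i\,\overline{\omega}(A^*\delta_H(A))\ge\Delta\left(\omega(A^*A)-|\omega(A)|^2\right)$ for all $A\in\mathfrak{A}_0$.
   Context: Let $\mathfrak{A}_0$ be a unital C*-algebra with C*-norm $\|\cdot\|_0$ and unit $I$, and $\|\cdot\|$ another norm on $\mathfrak{A}_0$ with $\|A\|\le\|A\|_0$, $\|AB\|\le\|A\|\,\|B\|_0$, $\|A^*\|=\|A\|$. $\mathfrak{A}$ is the $\|\cdot\|$-completion of $\mathfrak{A}_0$, with $XA:=\lim A_nA$, $AX:=\lim AA_n$, $X^*:=\lim A_n^*$ for $X\in\mathfrak{A}$, $A\in\mathfrak{A}_0$, $A_n\in\mathfrak{A}_0$, $\|A_n-X\|\to0$. $E(\mathfrak{A}_0)$ is the set of positive linear functionals $\omega$ on $\mathfrak{A}_0$ with $\omega(I)=1$ and $|\omega(A)|\le\gamma\|A\|$ for some $\gamma>0$; $\overline{\omega}$ is its continuous extension to $\mathfrak{A}$. $(\pi_\omega,\lambda_\omega,\mathcal{H}_\omega)$ is the GNS construction of $\omega$ on $\mathfrak{A}_0$ ($\lambda_\omega$ linear with dense range, $(\lambda_\omega(A)|\lambda_\omega(B))=\omega(B^*A)$).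 For $X\in\mathfrak{A}$, $B\in\mathfrak{A}_0$, $\pi_{\overline{\omega}}(X)\lambda_\omega(B)$ is the conjugate-linear functional on $\lambda_\omega(\mathfrak{A}_0)$ given by $\langle\pi_{\overline{\omega}}(X)\lambda_\omega(B),\lambda_\omega(C)\rangle=\overline{\omega}(C^*XB)$; it is bounded if it extends continuously to $\mathcal{H}_\omega$, and then $[\cdot]$ denotes the representing vector. $\delta_H(A):=i(HA-AH)$ for $A\in\mathfrak{A}_0$; $\overline{\omega}(A^*HA)$ means $\overline{\omega}(A^*(HA))$. $\overline{\omega}$ is a ground state for $H$ with eigenvalue $\alpha_*$ if $\overline{\omega}(AH)=\alpha_*\overline{\omega}(A)$ for all $A\in\mathfrak{A}_0$ and $\langle\pi_{\overline{\omega}}(H)\lambda_\omega(B),\lambda_\omega(B)\rangle\ge\alpha_*(\lambda_\omega(B)|\lambda_\omega(B))$ for all $B\in\mathfrak{A}_0$. Let $\mathrm{Ker}(\pi_{\overline{\omega}}(H)-\alpha_*I)$ denote the set of vectors $\lambda_\omega(B)$, $B\in\mathfrak{A}_0$, such that $\pi_{\overline{\omega}}(H)\lambda_\omega(B)$ is bounded and $[\pi_{\overline{\omega}}(H)\lambda_\omega(B)]=\alpha_*\lambda_\omega(B)$. The ground state $\overline{\omega}$ is nondegenerate if $\mathrm{Ker}(\pi_{\overline{\omega}}(H)-\alpha_*I)=\mathbb{C}\lambda_\omega(I)$, and gapped if there is $\Delta>0$ such that $\overline{\omega}(A^*HA)\ge(\alpha_*+\Delta)\omega(A^*A)$ for all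 $A\in\mathfrak{A}_0$ with $\lambda_\omega(A)\in(\mathrm{Ker}(\pi_{\overline{\omega}}(H)-\alpha_*I))^\perp$. *)

theory Defs
  imports "HOL-Analysis.Analysis" "HOL-Library.Complex_Order"
begin

(* Abstract algebraic/normed structure, with complex scalars given     *)
(* explicitly (HOL has no complex vector space class).                 *)

definition cvector_space :: "(complex \<Rightarrow> 'v::ab_group_add \<Rightarrow> 'v) \<Rightarrow> bool" where
  "cvector_space sc \<longleftrightarrow>
     (\<forall>x. sc 1 x = x) \<and> (\<forall>a b x. sc (a * b) x = sc a (sc b x)) \<and>
     (\<forall>a b x. sc (a + b) x = sc a x + sc b x) \<and> (\<forall>a x y. sc a (x + y) = sc a x + sc a y)"

definition is_cnorm :: "(complex \<Rightarrow> 'v::ab_group_add \<Rightarrow> 'v) \<Rightarrow> ('v \<Rightarrow> real) \<Rightarrow> bool" where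
  "is_cnorm sc nm \<longleftrightarrow>
     (\<forall>x. 0 \<le> nm x) \<and> (\<forall>x. nm x = 0 \<longleftrightarrow> x = 0) \<and>
     (\<forall>x y. nm (x + y) \<le> nm x + nm y) \<and> (\<forall>a x. nm (sc a x) = cmod a * nm x)"

definition is_complete :: "('v::ab_group_add \<Rightarrow> real) \<Rightarrow> bool" where
  "is_complete nm \<longleftrightarrow>
     (\<forall>f::nat \<Rightarrow> 'v. (\<forall>e>0. \<exists>N. \<forall>m\<ge>N. \<forall>k\<ge>N. nm (f m - f k) < e) \<longrightarrow>
        (\<exists>L. (\<lambda>k. nm (f k - L)) \<longlonglongrightarrow> 0))"

definition nconv :: "('v::ab_group_add \<Rightarrow> real) \<Rightarrow> (nat \<Rightarrow> 'v) \<Rightarrow> 'v \<Rightarrow> bool" where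
  "nconv nm f L \<longleftrightarrow> (\<lambda>k. nm (f k - L)) \<longlonglongrightarrow> 0"

definition unital_cstar_algebra ::
  "(complex \<Rightarrow> 'a::ring_1 \<Rightarrow> 'a) \<Rightarrow> ('a \<Rightarrow> 'a) \<Rightarrow> ('a \<Rightarrow> real) \<Rightarrow> bool" where
  "unital_cstar_algebra sc st n0 \<longleftrightarrow>
     cvector_space sc \<and>
     (\<forall>a x y. sc a (x * y) = sc a x * y) \<and> (\<forall>a x y. sc a (x * y) = x * sc a y) \<and>
     (\<forall>x y. st (x + y) = st x + st y) \<and> (\<forall>a x. st (sc a x) = sc (cnj a) (st x)) \<and>
     (\<forall>x y. st (x * y) = st y * st x) \<and> (\<forall>x. st (st x) = x) \<and>
     is_cnorm sc n0 \<and> (\<forall>x y. n0 (x * y) \<le> n0 x * n0 y) \<and>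
     (\<forall>x. n0 (st x * x) = (n0 x)\<^sup>2) \<and> is_complete n0"

definition cq_norm ::
  "(complex \<Rightarrow> 'a::ring_1 \<Rightarrow> 'a) \<Rightarrow> ('a \<Rightarrow> 'a) \<Rightarrow> ('a \<Rightarrow> real) \<Rightarrow> ('a \<Rightarrow> real) \<Rightarrow> bool" where
  "cq_norm sc st n0 n \<longleftrightarrow>
     is_cnorm sc n \<and> (\<forall>A. n A \<le> n0 A) \<and> (\<forall>A B. n (A * B) \<le> n A * n0 B) \<and>
     (\<forall>A. n (st A) = n A)"

definition is_completion ::
  "(complex \<Rightarrow> 'a::ring_1 \<Rightarrow> 'a) \<Rightarrow> ('a \<Rightarrow> real) \<Rightarrow> ('a \<Rightarrow> 'x::ab_group_add) \<Rightarrow>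
   (complex \<Rightarrow> 'x \<Rightarrow> 'x) \<Rightarrow> ('x \<Rightarrow> real) \<Rightarrow> bool" where
  "is_completion sc n ix scX nX \<longleftrightarrow>
     cvector_space scX \<and> is_cnorm scX nX \<and> is_complete nX \<and>
     (\<forall>A B. ix (A + B) = ix A + ix B) \<and> (\<forall>c A. ix (sc c A) = scX c (ix A)) \<and>
     (\<forall>A. nX (ix A) = n A) \<and>
     (\<forall>X. \<forall>e>0. \<exists>A. nX (X - ix A) < e)"

definition cqstar_setting ::
  "(complex \<Rightarrow> 'a::ring_1 \<Rightarrow> 'a) \<Rightarrow> ('a \<Rightarrow> 'a) \<Rightarrow> ('a \<Rightarrow> real) \<Rightarrow> ('a \<Rightarrow> real) \<Rightarrow>
   ('a \<Rightarrow> 'x::ab_group_add) \<Rightarrow> (complex \<Rightarrow> 'x \<Rightarrow> 'x) \<Rightarrow> ('x \<Rightarrow> real) \<Rightarrow> bool" where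
  "cqstar_setting sc st n0 n ix scX nX \<longleftrightarrow>
     unital_cstar_algebra sc st n0 \<and> cq_norm sc st n0 n \<and> is_completion sc n ix scX nX"

definition rmul :: "('a::ring_1 \<Rightarrow> 'x::ab_group_add) \<Rightarrow> ('x \<Rightarrow> real) \<Rightarrow> 'x \<Rightarrow> 'a \<Rightarrow> 'x" where
  "rmul ix nX X A = (THE Y. \<forall>f. nconv nX (\<lambda>k. ix (f k)) X \<longrightarrow> nconv nX (\<lambda>k. ix (f k * A)) Y)"

definition lmul :: "('a::ring_1 \<Rightarrow> 'x::ab_group_add) \<Rightarrow> ('x \<Rightarrow> real) \<Rightarrow> 'a \<Rightarrow> 'x \<Rightarrow> 'x" where
  "lmul ix nX A X = (THE Y. \<forall>f. nconv nX (\<lambda>k. ix (f k)) X \<longrightarrow> nconv nX (\<lambda>k. ix (A * f k)) Y)"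

definition starX :: "('a::ring_1 \<Rightarrow> 'x::ab_group_add) \<Rightarrow> ('a \<Rightarrow> 'a) \<Rightarrow> ('x \<Rightarrow> real) \<Rightarrow> 'x \<Rightarrow> 'x" where
  "starX ix st nX X = (THE Y. \<forall>f. nconv nX (\<lambda>k. ix (f k)) X \<longrightarrow> nconv nX (\<lambda>k. ix (st (f k))) Y)"

definition state_E ::
  "(complex \<Rightarrow> 'a::ring_1 \<Rightarrow> 'a) \<Rightarrow> ('a \<Rightarrow> 'a) \<Rightarrow> ('a \<Rightarrow> real) \<Rightarrow> ('a \<Rightarrow> complex) set" where
  "state_E sc st n = {\<omega>.
     (\<forall>A B. \<omega> (A + B) = \<omega> A + \<omega> B) \<and> (\<forall>c A. \<omega> (sc c A) = c * \<omega> A) \<and>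
     (\<forall>A. 0 \<le> \<omega> (st A * A)) \<and> \<omega> 1 = 1 \<and>
     (\<exists>\<gamma>>0. \<forall>A. cmod (\<omega> A) \<le> \<gamma> * n A)}"

definition omega_bar :: "('a::ring_1 \<Rightarrow> 'x::ab_group_add) \<Rightarrow> ('x \<Rightarrow> real) \<Rightarrow> ('a \<Rightarrow> complex) \<Rightarrow> 'x \<Rightarrow> complex" where
  "omega_bar ix nX \<omega> X = (THE z. \<forall>f. nconv nX (\<lambda>k. ix (f k)) X \<longrightarrow> (\<lambda>k. \<omega> (f k)) \<longlonglongrightarrow> z)"

(* GNS: (\<lambda>(A) | \<lambda>(B)) = \<omega>(B^* A) *)
definition gns_ip :: "('a::ring_1 \<Rightarrow> 'a) \<Rightarrow> ('a \<Rightarrow> complex) \<Rightarrow> 'a \<Rightarrow> 'a \<Rightarrow> complex" where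
  "gns_ip st \<omega> A B = \<omega> (st B * A)"

(* \<lambda>(A) = \<lambda>(B) in H_\<omega> *)
definition gns_eq :: "('a::ring_1 \<Rightarrow> 'a) \<Rightarrow> ('a \<Rightarrow> complex) \<Rightarrow> 'a \<Rightarrow> 'a \<Rightarrow> bool" where
  "gns_eq st \<omega> A B \<longleftrightarrow> gns_ip st \<omega> (A - B) (A - B) = 0"

(* < \<pi>bar(X) \<lambda>(B), \<lambda>(C) > = \<omega>bar(C^* X B) *)
definition pi_form ::
  "('a::ring_1 \<Rightarrow> 'x::ab_group_add) \<Rightarrow> ('a \<Rightarrow> 'a) \<Rightarrow> ('x \<Rightarrow> real) \<Rightarrow> ('a \<Rightarrow> complex) \<Rightarrow>
   'x \<Rightarrow> 'a \<Rightarrow> 'a \<Rightarrow> complex" where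
  "pi_form ix st nX \<omega> X B C = omega_bar ix nX \<omega> (lmul ix nX (st C) (rmul ix nX X B))"

(* \<pi>bar(X) \<lambda>(B) is bounded on \<lambda>(\<AA>0) (hence extends continuously to H_\<omega>) *)
definition pi_bounded ::
  "('a::ring_1 \<Rightarrow> 'x::ab_group_add) \<Rightarrow> ('a \<Rightarrow> 'a) \<Rightarrow> ('x \<Rightarrow> real) \<Rightarrow> ('a \<Rightarrow> complex) \<Rightarrow>
   'x \<Rightarrow> 'a \<Rightarrow> bool" where
  "pi_bounded ix st nX \<omega> X B \<longleftrightarrow>
     (\<exists>M. \<forall>C. cmod (pi_form ix st nX \<omega> X B C) \<le> M * sqrt (Re (gns_ip st \<omega> C C)))"

(* \<lambda>(B) \<in> Ker(\<pi>bar(H) - \<alpha> I): bounded and [\<pi>bar(H)\<lambda>(B)] = \<alpha> \<lambda>(B),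
   i.e. the representing vector has the same inner products with the
   dense set \<lambda>(\<AA>0) as \<alpha> \<lambda>(B) *)
definition in_ker ::
  "('a::ring_1 \<Rightarrow> 'x::ab_group_add) \<Rightarrow> ('a \<Rightarrow> 'a) \<Rightarrow> ('x \<Rightarrow> real) \<Rightarrow> ('a \<Rightarrow> complex) \<Rightarrow>
   'x \<Rightarrow> real \<Rightarrow> 'a \<Rightarrow> bool" where
  "in_ker ix st nX \<omega> H \<alpha> B \<longleftrightarrow>
     pi_bounded ix st nX \<omega> H B \<and>
     (\<forall>C. pi_form ix st nX \<omega> H B C = complex_of_real \<alpha> * gns_ip st \<omega> B C)"

definition ground_state ::
  "('a::ring_1 \<Rightarrow> 'x::ab_group_add) \<Rightarrow> ('a \<Rightarrow> 'a) \<Rightarrow> ('x \<Rightarrow> real) \<Rightarrow> ('a \<Rightarrow> complex) \<Rightarrow>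
   'x \<Rightarrow> real \<Rightarrow> bool" where
  "ground_state ix st nX \<omega> H \<alpha> \<longleftrightarrow>
     (\<forall>A. omega_bar ix nX \<omega> (lmul ix nX A H) = complex_of_real \<alpha> * \<omega> A) \<and>
     (\<forall>B. complex_of_real \<alpha> * gns_ip st \<omega> B B \<le> pi_form ix st nX \<omega> H B B)"

(* Ker(\<pi>bar(H) - \<alpha> I) = \<complex> \<lambda>(I) *)
definition nondegenerate_ground_state ::
  "(complex \<Rightarrow> 'a::ring_1 \<Rightarrow> 'a) \<Rightarrow> ('a::ring_1 \<Rightarrow> 'x::ab_group_add) \<Rightarrow> ('a \<Rightarrow> 'a) \<Rightarrow>
   ('x \<Rightarrow> real) \<Rightarrow> ('a \<Rightarrow> complex) \<Rightarrow> 'x \<Rightarrow> real \<Rightarrow> bool" where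
  "nondegenerate_ground_state sc ix st nX \<omega> H \<alpha> \<longleftrightarrow>
     ground_state ix st nX \<omega> H \<alpha> \<and>
     (\<forall>B. in_ker ix st nX \<omega> H \<alpha> B \<longleftrightarrow> (\<exists>c. gns_eq st \<omega> B (sc c 1)))"

definition gapped_ground_state ::
  "('a::ring_1 \<Rightarrow> 'x::ab_group_add) \<Rightarrow> ('a \<Rightarrow> 'a) \<Rightarrow> ('x \<Rightarrow> real) \<Rightarrow> ('a \<Rightarrow> complex) \<Rightarrow>
   'x \<Rightarrow> real \<Rightarrow> bool" where
  "gapped_ground_state ix st nX \<omega> H \<alpha> \<longleftrightarrow>
     ground_state ix st nX \<omega> H \<alpha> \<and>
     (\<exists>\<Delta>>0. \<forall>A. (\<forall>B. in_ker ix st nX \<omega> H \<alpha> B \<longrightarrow> gns_ip st \<omega> A B = 0) \<longrightarrow>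
        complex_of_real (\<alpha> + \<Delta>) * \<omega> (st A * A)
          \<le> omega_bar ix nX \<omega> (lmul ix nX (st A) (rmul ix nX H A)))"

definition deltaH ::
  "('a::ring_1 \<Rightarrow> 'x::ab_group_add) \<Rightarrow> (complex \<Rightarrow> 'x \<Rightarrow> 'x) \<Rightarrow> ('x \<Rightarrow> real) \<Rightarrow> 'x \<Rightarrow> 'a \<Rightarrow> 'x" where
  "deltaH ix scX nX H A = scX \<i> (rmul ix nX H A - lmul ix nX A H)"

end

theory Submission
  imports Defs
begin


definition normlike :: "('y::ab_group_add \<Rightarrow> real) \<Rightarrow> bool" where
  "normlike ny \<longleftrightarrow> (\<forall>x. 0 \<le> ny x) \<and> (\<forall>x y. ny (x + y) \<le> ny x + ny y) \<and>
     (\<forall>x. ny (- x) = ny x) \<and> (\<forall>x. ny x = 0 \<longrightarrow> x = 0)"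

lemma cvs_zero: assumes "cvector_space sc" shows "sc 0 x = 0"
proof -
  have "sc (0+0) x = sc 0 x + sc 0 x" using assms unfolding cvector_space_def by blast
  then show ?thesis by simp
qed

lemma cvs_neg: assumes "cvector_space sc" shows "sc (-1) x = - x"
proof -
  have "sc (-1 + 1) x = sc (-1) x + sc 1 x" using assms unfolding cvector_space_def by blast
  moreover have "sc 1 x = x" using assms unfolding cvector_space_def by blast
  ultimately have "sc (-1) x + x = 0" using cvs_zero[OF assms] by simp
  then show ?thesis by (simp add: eq_neg_iff_add_eq_0)
qed

lemma cvs_add2: assumes "cvector_space sc" shows "sc a (x + y) = sc a x + sc a y"
  using assms unfolding cvector_space_def by blast

lemma cvs_diff2: assumes "cvector_space sc" shows "sc a (x - y) = sc a x - sc a y"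
proof -
  have "sc a (x - y + y) = sc a (x - y) + sc a y" using cvs_add2[OF assms] by blast
  then show ?thesis by (simp add: eq_diff_eq)
qed

lemma cnorm_normlike: assumes "cvector_space sc" "is_cnorm sc nm" shows "normlike nm"
proof -
  have c: "\<forall>x. 0 \<le> nm x" "\<forall>x. nm x = 0 \<longleftrightarrow> x = 0" "\<forall>x y. nm (x + y) \<le> nm x + nm y"
    "\<forall>a x. nm (sc a x) = cmod a * nm x"
    using assms(2) unfolding is_cnorm_def by simp_all
  have "nm (- x) = nm x" for x
  proof -
    have "nm (sc (-1) x) = cmod (-1) * nm x" using c(4) by simp
    then show ?thesis using cvs_neg[OF assms(1)] by simp
  qed
  then show ?thesis using c(1,2,3) unfolding normlike_def by simp
qed

lemma normlike_cmod: "normlike cmod"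
  unfolding normlike_def by (simp add: norm_triangle_ineq)

lemma complete_cmod: "is_complete (cmod :: complex \<Rightarrow> real)"
  unfolding is_complete_def
proof (intro allI impI)
  fix f :: "nat \<Rightarrow> complex"
  assume "\<forall>e>0. \<exists>N. \<forall>m\<ge>N. \<forall>k\<ge>N. cmod (f m - f k) < e"
  then have "Cauchy f" unfolding Cauchy_def dist_norm by simp
  then have "convergent f" by (simp add: Cauchy_convergent_iff)
  then obtain L where L: "f \<longlonglongrightarrow> L" unfolding convergent_def by blast
  have "(\<lambda>k. f k - L) \<longlonglongrightarrow> 0" using L by (simp add: LIM_zero_iff)
  then have "(\<lambda>k. cmod (f k - L)) \<longlonglongrightarrow> 0" by (simp add: tendsto_norm_zero_iff)
  then show "\<exists>L. (\<lambda>k. cmod (f k - L)) \<longlonglongrightarrow> 0" by blast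
qed

lemma nconv_cmod_iff: "nconv cmod f L \<longleftrightarrow> f \<longlonglongrightarrow> L"
  unfolding nconv_def
  using tendsto_norm_zero_iff[of "\<lambda>k. f k - L" sequentially] LIM_zero_iff[of f L sequentially] by simp

lemma nl_sym: "normlike ny \<Longrightarrow> ny (x - y) = ny (y - x)"
  unfolding normlike_def by (metis minus_diff_eq)

lemma nl_add: "normlike ny \<Longrightarrow> ny (x + y) \<le> ny x + ny y"
  unfolding normlike_def by simp

lemma nl_tri: "normlike ny \<Longrightarrow> ny (x - z) \<le> ny (x - y) + ny (y - z)"
proof -
  assume nl: "normlike ny"
  have eq: "(x - y) + (y - z) = x - z" by (simp add: algebra_simps)
  have "ny ((x - y) + (y - z)) \<le> ny (x - y) + ny (y - z)" using nl by (rule nl_add)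
  then show ?thesis unfolding eq .
qed

lemma nl_nonneg: "normlike ny \<Longrightarrow> 0 \<le> ny x"
  unfolding normlike_def by blast

lemma nl_zero: "normlike ny \<Longrightarrow> ny x = 0 \<Longrightarrow> x = 0"
  unfolding normlike_def by blast

lemma null_cmp: fixes a b :: "nat \<Rightarrow> real"
  assumes "\<And>k. 0 \<le> a k" "\<And>k. a k \<le> b k" "b \<longlonglongrightarrow> 0" shows "a \<longlonglongrightarrow> 0"
  by (rule Lim_null_comparison[OF _ assms(3)]) (use assms in auto)

lemma nconv_unique: assumes nl: "normlike ny" and "nconv ny f L1" "nconv ny f L2" shows "L1 = L2"
proof -
  have b: "ny (L1 - L2) \<le> ny (f k - L1) + ny (f k - L2)" for k
    using nl_tri[OF nl, where x=L1 and y="f k" and z=L2] nl_sym[OF nl, of L1 "f k"] by simp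
  have "(\<lambda>k. ny (f k - L1) + ny (f k - L2)) \<longlonglongrightarrow> 0 + 0"
    using assms unfolding nconv_def by (intro tendsto_add)
  then have "ny (L1 - L2) \<le> 0"
    using b by (intro LIMSEQ_le_const) auto
  then have "ny (L1 - L2) = 0" using nl_nonneg[OF nl] by (meson order_antisym)
  from nl_zero[OF nl this] show ?thesis by simp
qed

lemma nconv_cauchy: assumes nl: "normlike ny" and c: "nconv ny f L"
  shows "\<forall>e>0. \<exists>N. \<forall>m\<ge>N. \<forall>k\<ge>N. ny (f m - f k) < e"
proof (intro allI impI)
  fix e :: real assume e: "e > 0"
  have h: "\<forall>d>0. \<forall>\<^sub>F k in sequentially. dist (ny (f k - L)) 0 < d"
    using c unfolding nconv_def tendsto_iff by blast
  have "e/2 > 0" using e by simp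
  then have "\<forall>\<^sub>F k in sequentially. dist (ny (f k - L)) 0 < e/2" using h by blast
  then obtain N where N0: "\<And>k. k \<ge> N \<Longrightarrow> dist (ny (f k - L)) 0 < e/2"
    unfolding eventually_sequentially by blast
  have N: "ny (f k - L) < e/2" if "k \<ge> N" for k
    using N0[OF that] nl_nonneg[OF nl, of "f k - L"] by (simp add: dist_real_def)
  show "\<exists>N. \<forall>m\<ge>N. \<forall>k\<ge>N. ny (f m - f k) < e"
  proof (intro exI allI impI)
    fix m k assume "m \<ge> N" "k \<ge> N"
    then show "ny (f m - f k) < e"
      using nl_tri[OF nl, where x="f m" and y=L and z="f k"] nl_sym[OF nl, of L "f k"] N[of m] N[of k] by simp
  qed
qed

lemma nconv_add: assumes nl: "normlike ny" and "nconv ny f L1" "nconv ny g L2"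
  shows "nconv ny (\<lambda>k. f k + g k) (L1 + L2)"
  unfolding nconv_def
proof (rule null_cmp)
  show "0 \<le> ny (f k + g k - (L1 + L2))" for k using nl_nonneg[OF nl] .
  show "ny (f k + g k - (L1 + L2)) \<le> ny (f k - L1) + ny (g k - L2)" for k
  proof -
    have "ny ((f k - L1) + (g k - L2)) \<le> ny (f k - L1) + ny (g k - L2)"
      using nl by (rule nl_add)
    then show ?thesis by (simp add: add_diff_add)
  qed
  show "(\<lambda>k. ny (f k - L1) + ny (g k - L2)) \<longlonglongrightarrow> 0"
    using tendsto_add[OF assms(2,3)[unfolded nconv_def]] by simp
qed



locale cqs =
  fixes sc :: "complex \<Rightarrow> 'a::ring_1 \<Rightarrow> 'a" and st :: "'a \<Rightarrow> 'a"
    and n0 n :: "'a \<Rightarrow> real"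
    and ix :: "'a \<Rightarrow> 'x::ab_group_add" and scX :: "complex \<Rightarrow> 'x \<Rightarrow> 'x" and nX :: "'x \<Rightarrow> real"
  assumes setting: "cqstar_setting sc st n0 n ix scX nX"
begin

lemma U: "unital_cstar_algebra sc st n0" using setting unfolding cqstar_setting_def by (elim conjE allE) assumption
lemma Q: "cq_norm sc st n0 n" using setting unfolding cqstar_setting_def by (elim conjE allE) assumption
lemma C: "is_completion sc n ix scX nX" using setting unfolding cqstar_setting_def by (elim conjE allE) assumption

lemma cvA: "cvector_space sc" using U unfolding unital_cstar_algebra_def by (elim conjE allE) assumption
lemma sc_ml: "sc a (x * y) = sc a x * y" using U unfolding unital_cstar_algebra_def by (elim conjE allE) assumption
lemma sc_mr: "sc a (x * y) = x * sc a y" using U unfolding unital_cstar_algebra_def by (elim conjE allE) assumption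
lemma st_add: "st (x + y) = st x + st y" using U unfolding unital_cstar_algebra_def by (elim conjE allE) assumption
lemma st_sc: "st (sc a x) = sc (cnj a) (st x)" using U unfolding unital_cstar_algebra_def by (elim conjE allE) assumption
lemma st_mult: "st (x * y) = st y * st x" using U unfolding unital_cstar_algebra_def by (elim conjE allE) assumption
lemma st_st: "st (st x) = x" using U unfolding unital_cstar_algebra_def by (elim conjE allE) assumption
lemma n0_cn: "is_cnorm sc n0" using U unfolding unital_cstar_algebra_def by (elim conjE allE) assumption
lemma n0_nonneg: "0 \<le> n0 x" using n0_cn unfolding is_cnorm_def by (elim conjE allE) assumption
lemma n_cn: "is_cnorm sc n" using Q unfolding cq_norm_def by (elim conjE allE) assumption
lemma n_mul: "n (A * B) \<le> n A * n0 B" using Q unfolding cq_norm_def by (elim conjE allE) assumption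
lemma n_st: "n (st A) = n A" using Q unfolding cq_norm_def by (elim conjE allE) assumption
lemma cvX: "cvector_space scX" using C unfolding is_completion_def by (elim conjE allE) assumption
lemma cnX: "is_cnorm scX nX" using C unfolding is_completion_def by (elim conjE allE) assumption
lemma complX: "is_complete nX" using C unfolding is_completion_def by (elim conjE allE) assumption
lemma ix_add: "ix (A + B) = ix A + ix B" using C unfolding is_completion_def by (elim conjE allE) assumption
lemma ix_sc: "ix (sc c A) = scX c (ix A)" using C unfolding is_completion_def by (elim conjE allE) assumption
lemma ix_n: "nX (ix A) = n A" using C unfolding is_completion_def by (elim conjE allE) assumption
lemma dense: "e > 0 \<Longrightarrow> \<exists>A. nX (X - ix A) < e" using C unfolding is_completion_def by blast
lemma nlX: "normlike nX" by (rule cnorm_normlike[OF cvX cnX])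
lemma nlA: "normlike n" by (rule cnorm_normlike[OF cvA n_cn])

lemma ix_diff: "ix (A - B) = ix A - ix B"
proof -
  have "ix (A - B + B) = ix (A - B) + ix B" by (rule ix_add)
  then show ?thesis by (simp add: eq_diff_eq)
qed

lemma seq_exists: "\<exists>h. nconv nX (\<lambda>k. ix (h k)) X"
proof -
  have "\<forall>k. \<exists>A. nX (X - ix A) < inverse (real (Suc k))"
    using dense by simp
  from choice[OF this] obtain h where h0: "\<forall>k. nX (X - ix (h k)) < inverse (real (Suc k))" by blast
  have h: "nX (X - ix (h k)) < inverse (real (Suc k))" for k using h0 by simp
  have "(\<lambda>k. nX (ix (h k) - X)) \<longlonglongrightarrow> 0"
  proof (rule null_cmp[OF _ _ LIMSEQ_inverse_real_of_nat])
    show "0 \<le> nX (ix (h k) - X)" for k by (rule nl_nonneg[OF nlX])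
    show "nX (ix (h k) - X) \<le> inverse (real (Suc k))" for k
      using h[of k] nl_sym[OF nlX, of "ix (h k)" X] by simp
  qed
  then show ?thesis unfolding nconv_def by blast
qed

lemma ext_exists:
  fixes g :: "'a \<Rightarrow> 'y::ab_group_add" and ny :: "'y \<Rightarrow> real"
  assumes nl: "normlike ny" and cp: "is_complete ny" and K: "0 \<le> K"
    and lip: "\<And>A B. ny (g A - g B) \<le> K * n (A - B)"
  shows "\<exists>Y. \<forall>f. nconv nX (\<lambda>k. ix (f k)) X \<longrightarrow> nconv ny (\<lambda>k. g (f k)) Y"
proof -
  obtain h where h: "nconv nX (\<lambda>k. ix (h k)) X" using seq_exists by blast
  have lip2: "ny (g A - g B) \<le> K * nX (ix A - ix B)" for A B
    using lip[of A B] by (simp add: ix_diff[symmetric] ix_n)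
  have ch: "\<forall>e>0. \<exists>N. \<forall>m\<ge>N. \<forall>k\<ge>N. nX (ix (h m) - ix (h k)) < e"
    using nconv_cauchy[OF nlX h] by simp
  have "\<forall>e>0. \<exists>N. \<forall>m\<ge>N. \<forall>k\<ge>N. ny (g (h m) - g (h k)) < e"
  proof (intro allI impI)
    fix e :: real assume e: "e > 0"
    then have e': "e / (K + 1) > 0" using K by simp
    have "\<exists>N. \<forall>m\<ge>N. \<forall>k\<ge>N. nX (ix (h m) - ix (h k)) < e / (K + 1)"
      by (rule ch[rule_format, OF e'])
    then obtain N where N0: "\<forall>m\<ge>N. \<forall>k\<ge>N. nX (ix (h m) - ix (h k)) < e / (K + 1)"
      by (elim exE)
    have N: "nX (ix (h m) - ix (h k)) < e / (K + 1)" if "m \<ge> N" "k \<ge> N" for m k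
      using N0 that by simp
    show "\<exists>N. \<forall>m\<ge>N. \<forall>k\<ge>N. ny (g (h m) - g (h k)) < e"
    proof (intro exI allI impI)
      fix m k assume mk: "m \<ge> N" "k \<ge> N"
      have "ny (g (h m) - g (h k)) \<le> K * nX (ix (h m) - ix (h k))" by (rule lip2)
      also have "\<dots> \<le> K * (e / (K + 1))" using N[OF mk] K by (intro mult_left_mono) auto
      also have "\<dots> < e" using e K by (simp add: field_simps)
      finally show "ny (g (h m) - g (h k)) < e" .
    qed
  qed
  then have "\<exists>L. (\<lambda>k. ny (g (h k) - L)) \<longlonglongrightarrow> 0"
  proof -
    have "\<forall>f::nat \<Rightarrow> 'y. (\<forall>e>0. \<exists>N. \<forall>m\<ge>N. \<forall>k\<ge>N. ny (f m - f k) < e) \<longrightarrow>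
        (\<exists>L. (\<lambda>k. ny (f k - L)) \<longlonglongrightarrow> 0)" using cp unfolding is_complete_def .
    then have "(\<forall>e>0. \<exists>N. \<forall>m\<ge>N. \<forall>k\<ge>N. ny (g (h m) - g (h k)) < e) \<longrightarrow>
        (\<exists>L. (\<lambda>k. ny (g (h k) - L)) \<longlonglongrightarrow> 0)" by (rule spec[where x="\<lambda>k. g (h k)"])
    then show ?thesis using \<open>\<forall>e>0. \<exists>N. \<forall>m\<ge>N. \<forall>k\<ge>N. ny (g (h m) - g (h k)) < e\<close> by (rule mp)
  qed
  then obtain Y where Y: "(\<lambda>k. ny (g (h k) - Y)) \<longlonglongrightarrow> 0" by (elim exE)
  have "nconv ny (\<lambda>k. g (f k)) Y" if f: "nconv nX (\<lambda>k. ix (f k)) X" for f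
    unfolding nconv_def
  proof (rule null_cmp)
    show "0 \<le> ny (g (f k) - Y)" for k by (rule nl_nonneg[OF nl])
    show "ny (g (f k) - Y) \<le> K * (nX (ix (f k) - X) + nX (ix (h k) - X)) + ny (g (h k) - Y)" for k
    proof -
      have "ny (g (f k) - Y) \<le> ny (g (f k) - g (h k)) + ny (g (h k) - Y)" by (rule nl_tri[OF nl])
      moreover have "ny (g (f k) - g (h k)) \<le> K * nX (ix (f k) - ix (h k))" by (rule lip2)
      moreover have "nX (ix (f k) - ix (h k)) \<le> nX (ix (f k) - X) + nX (X - ix (h k))" by (rule nl_tri[OF nlX])
      moreover have "nX (X - ix (h k)) = nX (ix (h k) - X)" by (rule nl_sym[OF nlX])
      ultimately have "K * nX (ix (f k) - ix (h k)) \<le> K * (nX (ix (f k) - X) + nX (ix (h k) - X))"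
        using K by (intro mult_left_mono) simp_all
      with \<open>ny (g (f k) - g (h k)) \<le> K * nX (ix (f k) - ix (h k))\<close>
      have "ny (g (f k) - g (h k)) \<le> K * (nX (ix (f k) - X) + nX (ix (h k) - X))" by linarith
      then show ?thesis using \<open>ny (g (f k) - Y) \<le> ny (g (f k) - g (h k)) + ny (g (h k) - Y)\<close> by linarith
    qed
    show "(\<lambda>k. K * (nX (ix (f k) - X) + nX (ix (h k) - X)) + ny (g (h k) - Y)) \<longlonglongrightarrow> 0"
    proof -
      have "(\<lambda>k. K * (nX (ix (f k) - X) + nX (ix (h k) - X)) + ny (g (h k) - Y)) \<longlonglongrightarrow> K * (0 + 0) + 0"
        using f h Y unfolding nconv_def by (intro tendsto_intros)
      then show ?thesis by simp
    qed
  qed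
  then show ?thesis by blast
qed

lemma ext_the:
  fixes g :: "'a \<Rightarrow> 'y::ab_group_add" and ny :: "'y \<Rightarrow> real"
  assumes nl: "normlike ny" and cp: "is_complete ny" and K: "0 \<le> K"
    and lip: "\<And>A B. ny (g A - g B) \<le> K * n (A - B)"
    and f: "nconv nX (\<lambda>k. ix (f k)) X"
  shows "nconv ny (\<lambda>k. g (f k)) (THE Y. \<forall>f. nconv nX (\<lambda>k. ix (f k)) X \<longrightarrow> nconv ny (\<lambda>k. g (f k)) Y)"
proof -
  obtain Y where Y: "\<forall>f. nconv nX (\<lambda>k. ix (f k)) X \<longrightarrow> nconv ny (\<lambda>k. g (f k)) Y"
    using ext_exists[OF nl cp K lip] by blast
  obtain h where h: "nconv nX (\<lambda>k. ix (h k)) X" using seq_exists by blast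
  have "(THE Y. \<forall>f. nconv nX (\<lambda>k. ix (f k)) X \<longrightarrow> nconv ny (\<lambda>k. g (f k)) Y) = Y"
  proof (rule the_equality)
    show "\<forall>f. nconv nX (\<lambda>k. ix (f k)) X \<longrightarrow> nconv ny (\<lambda>k. g (f k)) Y" by (rule Y)
    fix Y' assume "\<forall>f. nconv nX (\<lambda>k. ix (f k)) X \<longrightarrow> nconv ny (\<lambda>k. g (f k)) Y'"
    then have "nconv ny (\<lambda>k. g (h k)) Y'" using h by blast
    moreover have "nconv ny (\<lambda>k. g (h k)) Y" using Y h by blast
    ultimately show "Y' = Y" by (rule nconv_unique[OF nl])
  qed
  then show ?thesis using Y f by simp
qed

end


context cqs begin

lemma nX_sc: "nX (scX a x) = cmod a * nX x" using cnX unfolding is_cnorm_def by (elim conjE allE) assumption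
lemma uX: "nconv nX f L1 \<Longrightarrow> nconv nX f L2 \<Longrightarrow> L1 = L2" by (rule nconv_unique[OF nlX])

lemma rmul_conv: assumes f: "nconv nX (\<lambda>k. ix (f k)) X"
  shows "nconv nX (\<lambda>k. ix (f k * B)) (rmul ix nX X B)"
proof -
  have lip: "nX (ix (A * B) - ix (A' * B)) \<le> n0 B * n (A - A')" for A A'
  proof -
    have "nX (ix (A * B) - ix (A' * B)) = n ((A - A') * B)" by (simp add: ix_diff[symmetric] ix_n left_diff_distrib)
    also have "\<dots> \<le> n (A - A') * n0 B" by (rule n_mul)
    finally show ?thesis by (simp add: mult.commute)
  qed
  show ?thesis unfolding rmul_def
    by (rule ext_the[where g="\<lambda>A. ix (A * B)", OF nlX complX n0_nonneg lip f])
qed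

lemma lmul_conv: assumes f: "nconv nX (\<lambda>k. ix (f k)) X"
  shows "nconv nX (\<lambda>k. ix (B * f k)) (lmul ix nX B X)"
proof -
  have lip: "nX (ix (B * A) - ix (B * A')) \<le> n0 (st B) * n (A - A')" for A A'
  proof -
    have "nX (ix (B * A) - ix (B * A')) = n (B * (A - A'))" by (simp add: ix_diff[symmetric] ix_n right_diff_distrib)
    also have "\<dots> = n (st (A - A') * st B)" using n_st[of "B * (A - A')"] by (simp add: st_mult)
    also have "\<dots> \<le> n (st (A - A')) * n0 (st B)" by (rule n_mul)
    finally show ?thesis by (simp add: mult.commute n_st)
  qed
  show ?thesis unfolding lmul_def
    by (rule ext_the[where g="\<lambda>A. ix (B * A)", OF nlX complX n0_nonneg lip f])
qed

lemma nconvX_sc: assumes "nconv nX f L" shows "nconv nX (\<lambda>k. scX c (f k)) (scX c L)"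
proof -
  have "(\<lambda>k. cmod c * nX (f k - L)) \<longlonglongrightarrow> cmod c * 0"
    using assms unfolding nconv_def by (intro tendsto_intros)
  then show ?thesis unfolding nconv_def by (simp add: cvs_diff2[OF cvX, symmetric] nX_sc)
qed

lemma ix_conv_add: "nconv nX (\<lambda>k. ix (f k)) X \<Longrightarrow> nconv nX (\<lambda>k. ix (g k)) Y \<Longrightarrow>
   nconv nX (\<lambda>k. ix (f k + g k)) (X + Y)"
  unfolding ix_add by (rule nconv_add[OF nlX])

lemma ix_conv_sc: "nconv nX (\<lambda>k. ix (f k)) X \<Longrightarrow> nconv nX (\<lambda>k. ix (sc c (f k))) (scX c X)"
  unfolding ix_sc by (rule nconvX_sc)

lemma lmul2_add: "lmul ix nX A (X + Y) = lmul ix nX A X + lmul ix nX A Y"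
proof -
  obtain f where f: "nconv nX (\<lambda>k. ix (f k)) X" using seq_exists by blast
  obtain g where g: "nconv nX (\<lambda>k. ix (g k)) Y" using seq_exists by blast
  have 1: "nconv nX (\<lambda>k. ix (A * (f k + g k))) (lmul ix nX A (X + Y))"
    by (rule lmul_conv[OF ix_conv_add[OF f g]])
  have 2: "nconv nX (\<lambda>k. ix (A * (f k + g k))) (lmul ix nX A X + lmul ix nX A Y)"
    unfolding distrib_left ix_add by (rule nconv_add[OF nlX lmul_conv[OF f] lmul_conv[OF g]])
  show ?thesis by (rule uX[OF 1 2])
qed

lemma lmul2_sc: "lmul ix nX A (scX c X) = scX c (lmul ix nX A X)"
proof -
  obtain f where f: "nconv nX (\<lambda>k. ix (f k)) X" using seq_exists by blast
  have 1: "nconv nX (\<lambda>k. ix (A * sc c (f k))) (lmul ix nX A (scX c X))"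
    by (rule lmul_conv[OF ix_conv_sc[OF f]])
  have 2: "nconv nX (\<lambda>k. ix (A * sc c (f k))) (scX c (lmul ix nX A X))"
    unfolding sc_mr[symmetric] ix_sc by (rule nconvX_sc[OF lmul_conv[OF f]])
  show ?thesis by (rule uX[OF 1 2])
qed

lemma lmul2_diff: "lmul ix nX A (X - Y) = lmul ix nX A X - lmul ix nX A Y"
proof -
  have "lmul ix nX A (X - Y + Y) = lmul ix nX A (X - Y) + lmul ix nX A Y" by (rule lmul2_add)
  then show ?thesis by (simp add: eq_diff_eq)
qed

lemma lmul1_add: "lmul ix nX (A + B) X = lmul ix nX A X + lmul ix nX B X"
proof -
  obtain f where f: "nconv nX (\<lambda>k. ix (f k)) X" using seq_exists by blast
  have 1: "nconv nX (\<lambda>k. ix ((A + B) * f k)) (lmul ix nX (A + B) X)"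
    by (rule lmul_conv[OF f])
  have 2: "nconv nX (\<lambda>k. ix ((A + B) * f k)) (lmul ix nX A X + lmul ix nX B X)"
    unfolding distrib_right ix_add by (rule nconv_add[OF nlX lmul_conv[OF f] lmul_conv[OF f]])
  show ?thesis by (rule uX[OF 1 2])
qed

lemma lmul1_sc: "lmul ix nX (sc c A) X = scX c (lmul ix nX A X)"
proof -
  obtain f where f: "nconv nX (\<lambda>k. ix (f k)) X" using seq_exists by blast
  have 1: "nconv nX (\<lambda>k. ix (sc c A * f k)) (lmul ix nX (sc c A) X)"
    by (rule lmul_conv[OF f])
  have 2: "nconv nX (\<lambda>k. ix (sc c A * f k)) (scX c (lmul ix nX A X))"
    unfolding sc_ml[symmetric] ix_sc by (rule nconvX_sc[OF lmul_conv[OF f]])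
  show ?thesis by (rule uX[OF 1 2])
qed

lemma rmul_add: "rmul ix nX X (A + B) = rmul ix nX X A + rmul ix nX X B"
proof -
  obtain f where f: "nconv nX (\<lambda>k. ix (f k)) X" using seq_exists by blast
  have 1: "nconv nX (\<lambda>k. ix (f k * (A + B))) (rmul ix nX X (A + B))"
    by (rule rmul_conv[OF f])
  have 2: "nconv nX (\<lambda>k. ix (f k * (A + B))) (rmul ix nX X A + rmul ix nX X B)"
    unfolding distrib_left ix_add by (rule nconv_add[OF nlX rmul_conv[OF f] rmul_conv[OF f]])
  show ?thesis by (rule uX[OF 1 2])
qed

lemma rmul_sc: "rmul ix nX X (sc c A) = scX c (rmul ix nX X A)"
proof -
  obtain f where f: "nconv nX (\<lambda>k. ix (f k)) X" using seq_exists by blast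
  have 1: "nconv nX (\<lambda>k. ix (f k * sc c A)) (rmul ix nX X (sc c A))"
    by (rule rmul_conv[OF f])
  have 2: "nconv nX (\<lambda>k. ix (f k * sc c A)) (scX c (rmul ix nX X A))"
    unfolding sc_mr[symmetric] ix_sc by (rule nconvX_sc[OF rmul_conv[OF f]])
  show ?thesis by (rule uX[OF 1 2])
qed

lemma rmul_one: "rmul ix nX X 1 = X"
proof -
  obtain f where f: "nconv nX (\<lambda>k. ix (f k)) X" using seq_exists by blast
  have 1: "nconv nX (\<lambda>k. ix (f k)) (rmul ix nX X 1)"
    using rmul_conv[OF f, of 1] by simp
  show ?thesis by (rule uX[OF 1 f])
qed

lemma lmul_one: "lmul ix nX 1 X = X"
proof -
  obtain f where f: "nconv nX (\<lambda>k. ix (f k)) X" using seq_exists by blast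
  have 1: "nconv nX (\<lambda>k. ix (f k)) (lmul ix nX 1 X)"
    using lmul_conv[OF f, of 1] by simp
  show ?thesis by (rule uX[OF 1 f])
qed

lemma lmul_assoc: "lmul ix nX A (lmul ix nX B X) = lmul ix nX (A * B) X"
proof -
  obtain f where f: "nconv nX (\<lambda>k. ix (f k)) X" using seq_exists by blast
  have g: "nconv nX (\<lambda>k. ix (B * f k)) (lmul ix nX B X)" by (rule lmul_conv[OF f])
  have 1: "nconv nX (\<lambda>k. ix (A * (B * f k))) (lmul ix nX A (lmul ix nX B X))"
    by (rule lmul_conv[OF g])
  have 2: "nconv nX (\<lambda>k. ix (A * (B * f k))) (lmul ix nX (A * B) X)"
    unfolding mult.assoc[symmetric] by (rule lmul_conv[OF f])
  show ?thesis by (rule uX[OF 1 2])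
qed

end

locale cqsw = cqs +
  fixes \<omega> :: "'a::ring_1 \<Rightarrow> complex"
  assumes omE: "\<omega> \<in> state_E sc st n"
begin

lemma om_add: "\<omega> (A + B) = \<omega> A + \<omega> B" using omE unfolding state_E_def by (elim CollectE conjE allE) assumption
lemma om_sc: "\<omega> (sc c A) = c * \<omega> A" using omE unfolding state_E_def by (elim CollectE conjE allE) assumption
lemma om_pos: "0 \<le> \<omega> (st A * A)" using omE unfolding state_E_def by (elim CollectE conjE allE) assumption
lemma om_one: "\<omega> 1 = 1" using omE unfolding state_E_def by (elim CollectE conjE allE) assumption
lemma om_bd: "\<exists>\<gamma>>0. \<forall>A. cmod (\<omega> A) \<le> \<gamma> * n A" using omE unfolding state_E_def by (elim CollectE conjE) assumption

lemma om_diff: "\<omega> (A - B) = \<omega> A - \<omega> B"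
proof -
  have "\<omega> (A - B + B) = \<omega> (A - B) + \<omega> B" by (rule om_add)
  then show ?thesis by (simp add: eq_diff_eq)
qed

lemma ob_conv: assumes f: "nconv nX (\<lambda>k. ix (f k)) X"
  shows "(\<lambda>k. \<omega> (f k)) \<longlonglongrightarrow> omega_bar ix nX \<omega> X"
proof -
  obtain \<gamma> where g: "\<gamma> > 0" "\<And>A. cmod (\<omega> A) \<le> \<gamma> * n A" using om_bd by blast
  have lip: "cmod (\<omega> A - \<omega> B) \<le> \<gamma> * n (A - B)" for A B
    using g(2)[of "A - B"] by (simp add: om_diff)
  have "nconv cmod (\<lambda>k. \<omega> (f k)) (omega_bar ix nX \<omega> X)"
    unfolding omega_bar_def nconv_cmod_iff[symmetric]
    by (rule ext_the[where g=\<omega>, OF normlike_cmod complete_cmod _ lip f]) (use g in simp)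
  then show ?thesis by (simp add: nconv_cmod_iff)
qed

lemma ob_add: "omega_bar ix nX \<omega> (X + Y) = omega_bar ix nX \<omega> X + omega_bar ix nX \<omega> Y"
proof -
  obtain f where f: "nconv nX (\<lambda>k. ix (f k)) X" using seq_exists by blast
  obtain g where g: "nconv nX (\<lambda>k. ix (g k)) Y" using seq_exists by blast
  have 1: "(\<lambda>k. \<omega> (f k + g k)) \<longlonglongrightarrow> omega_bar ix nX \<omega> (X + Y)"
    by (rule ob_conv[OF ix_conv_add[OF f g]])
  have 2: "(\<lambda>k. \<omega> (f k + g k)) \<longlonglongrightarrow> omega_bar ix nX \<omega> X + omega_bar ix nX \<omega> Y"
    unfolding om_add by (rule tendsto_add[OF ob_conv[OF f] ob_conv[OF g]])
  show ?thesis by (rule LIMSEQ_unique[OF 1 2])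
qed

lemma ob_sc: "omega_bar ix nX \<omega> (scX c X) = c * omega_bar ix nX \<omega> X"
proof -
  obtain f where f: "nconv nX (\<lambda>k. ix (f k)) X" using seq_exists by blast
  have 1: "(\<lambda>k. \<omega> (sc c (f k))) \<longlonglongrightarrow> omega_bar ix nX \<omega> (scX c X)"
    by (rule ob_conv[OF ix_conv_sc[OF f]])
  have 2: "(\<lambda>k. \<omega> (sc c (f k))) \<longlonglongrightarrow> c * omega_bar ix nX \<omega> X"
    unfolding om_sc by (rule tendsto_mult[OF tendsto_const ob_conv[OF f]])
  show ?thesis by (rule LIMSEQ_unique[OF 1 2])
qed

lemma ob_diff: "omega_bar ix nX \<omega> (X - Y) = omega_bar ix nX \<omega> X - omega_bar ix nX \<omega> Y"
proof -
  have "omega_bar ix nX \<omega> (X - Y + Y) = omega_bar ix nX \<omega> (X - Y) + omega_bar ix nX \<omega> Y" by (rule ob_add)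
  then show ?thesis by (simp add: eq_diff_eq)
qed

end


lemma sesq_expand:
  fixes \<phi> :: "'a::ab_group_add \<Rightarrow> 'a \<Rightarrow> complex" and sc :: "complex \<Rightarrow> 'a \<Rightarrow> 'a"
  assumes a1: "\<And>B1 B2 C. \<phi> (B1 + B2) C = \<phi> B1 C + \<phi> B2 C"
    and s1: "\<And>z B C. \<phi> (sc z B) C = z * \<phi> B C"
    and a2: "\<And>B C1 C2. \<phi> B (C1 + C2) = \<phi> B C1 + \<phi> B C2"
    and s2: "\<And>z B C. \<phi> B (sc z C) = cnj z * \<phi> B C"
  shows "\<phi> (X + sc z Y) (X + sc z Y) = \<phi> X X + z * \<phi> Y X + cnj z * \<phi> X Y + cnj z * z * \<phi> Y Y"
  by (simp add: a1 a2 s1 s2 algebra_simps)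

lemma cpos_iff: "(0::complex) \<le> w \<longleftrightarrow> 0 \<le> Re w \<and> Im w = 0"
  by (auto simp: less_eq_complex_def)

context cqsw begin

lemma sc_one: "sc 1 x = x" using cvA unfolding cvector_space_def by (elim conjE allE) assumption

lemma st_one: "st 1 = 1"
proof -
  have "st (st 1 * 1) = st 1 * st (st 1)" by (rule st_mult)
  then have "st (st 1) = st 1 * 1" by (simp add: st_st)
  then show ?thesis by (simp add: st_st)
qed

lemma om_zero: "\<omega> 0 = 0"
  using om_add[of 0 0] by simp

definition F :: "'a \<Rightarrow> 'a \<Rightarrow> complex" where "F B C = \<omega> (st C * B)"

lemma F_a1: "F (B1 + B2) C = F B1 C + F B2 C" unfolding F_def by (simp add: distrib_left om_add)
lemma F_s1: "F (sc z B) C = z * F B C" unfolding F_def by (simp add: sc_mr[symmetric] om_sc)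
lemma F_a2: "F B (C1 + C2) = F B C1 + F B C2" unfolding F_def by (simp add: st_add distrib_right om_add)
lemma F_s2: "F B (sc z C) = cnj z * F B C" unfolding F_def by (simp add: st_sc sc_ml[symmetric] om_sc)

lemma F_exp: "F (X + sc z Y) (X + sc z Y) = F X X + z * F Y X + cnj z * F X Y + cnj z * z * F Y Y"
  by (rule sesq_expand[where sc=sc, OF F_a1 F_s1 F_a2 F_s2])

lemma F_pos: "Im (F X X) = 0" "0 \<le> Re (F X X)"
  using om_pos[of X] unfolding F_def cpos_iff by simp_all

lemma herm: "\<omega> (st X) = cnj (\<omega> X)"
proof -
  have e: "F (X + sc z 1) (X + sc z 1) = F X X + z * \<omega> (st X) + cnj z * \<omega> X + cnj z * z" for z
    using F_exp[of X z 1] unfolding F_def by (simp add: st_one om_one)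
  have "Im (F X X + 1 * \<omega> (st X) + cnj 1 * \<omega> X + cnj 1 * 1) = 0"
    using F_pos(1)[of "X + sc 1 1"] e[of 1] by simp
  then have 1: "Im (\<omega> (st X)) + Im (\<omega> X) = 0" using F_pos(1)[of X] by simp
  have "Im (F X X + \<i> * \<omega> (st X) + cnj \<i> * \<omega> X + cnj \<i> * \<i>) = 0"
    using F_pos(1)[of "X + sc \<i> 1"] e[of \<i>] by simp
  then have 2: "Re (\<omega> (st X)) - Re (\<omega> X) = 0" using F_pos(1)[of X] by simp
  show ?thesis using 1 2 by (simp add: complex_eq_iff)
qed

lemma cs0: assumes D: "\<omega> (st D * D) = 0" shows "\<omega> (st D * Y) = 0"
proof -
  define a where "a = \<omega> (st D * Y)"
  define p where "p = F Y Y"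
  have FDY: "F D Y = cnj a"
  proof -
    have "F D Y = \<omega> (st (st D * Y))" unfolding F_def by (simp add: st_mult st_st)
    then show ?thesis unfolding a_def by (simp add: herm)
  qed
  have FYD: "F Y D = a" unfolding F_def a_def ..
  have FDD: "F D D = 0" unfolding F_def using D .
  have e: "F (Y + sc z D) (Y + sc z D) = p + z * cnj a + cnj z * a" for z
    using F_exp[of Y z D] unfolding p_def FDY FYD FDD by simp
  have r: "0 \<le> Re p - 2 * t * ((Re a)\<^sup>2 + (Im a)\<^sup>2)" for t :: real
  proof -
    have "0 \<le> Re (F (Y + sc (- (complex_of_real t * a)) D) (Y + sc (- (complex_of_real t * a)) D))"
      by (rule F_pos(2))
    also have "\<dots> = Re p - 2 * t * ((Re a)\<^sup>2 + (Im a)\<^sup>2)"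
      unfolding e by (simp add: power2_eq_square algebra_simps)
    finally show ?thesis .
  qed
  show ?thesis
  proof (rule ccontr)
    assume "\<omega> (st D * Y) \<noteq> 0"
    then have s: "(Re a)\<^sup>2 + (Im a)\<^sup>2 > 0" unfolding a_def
      by (simp add: complex_eq_iff sum_power2_gt_zero_iff)
    have "0 \<le> Re p - 2 * ((Re p + 1) / (2 * ((Re a)\<^sup>2 + (Im a)\<^sup>2))) * ((Re a)\<^sup>2 + (Im a)\<^sup>2)"
      by (rule r)
    also have "\<dots> = -1" using s by (simp add: field_simps)
    finally show False by simp
  qed
qed


lemma S_a1: "pi_form ix st nX \<omega> H (B1 + B2) C = pi_form ix st nX \<omega> H B1 C + pi_form ix st nX \<omega> H B2 C"
  unfolding pi_form_def by (simp add: rmul_add lmul2_add ob_add)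
lemma S_s1: "pi_form ix st nX \<omega> H (sc z B) C = z * pi_form ix st nX \<omega> H B C"
  unfolding pi_form_def by (simp add: rmul_sc lmul2_sc ob_sc)
lemma S_a2: "pi_form ix st nX \<omega> H B (C1 + C2) = pi_form ix st nX \<omega> H B C1 + pi_form ix st nX \<omega> H B C2"
  unfolding pi_form_def by (simp add: st_add lmul1_add ob_add)
lemma S_s2: "pi_form ix st nX \<omega> H B (sc z C) = cnj z * pi_form ix st nX \<omega> H B C"
  unfolding pi_form_def by (simp add: st_sc lmul1_sc ob_sc)

lemma S_exp: "pi_form ix st nX \<omega> H (X + sc z Y) (X + sc z Y) = pi_form ix st nX \<omega> H X X
   + z * pi_form ix st nX \<omega> H Y X + cnj z * pi_form ix st nX \<omega> H X Y + cnj z * z * pi_form ix st nX \<omega> H Y Y"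
  by (rule sesq_expand[where sc=sc, OF S_a1 S_s1 S_a2 S_s2])

lemma main:
  assumes nd: "nondegenerate_ground_state sc ix st nX \<omega> H \<alpha>"
  shows "gapped_ground_state ix st nX \<omega> H \<alpha> \<longleftrightarrow>
    (\<exists>\<Delta>>0. \<forall>A. complex_of_real \<Delta> * (\<omega> (st A * A) - complex_of_real ((cmod (\<omega> A))\<^sup>2))
        \<le> - \<i> * omega_bar ix nX \<omega> (lmul ix nX (st A) (deltaH ix scX nX H A)))"
proof -
  define S where "S = pi_form ix st nX \<omega> H"
  define N where "N A = \<omega> (st A * A)" for A
  have gs: "ground_state ix st nX \<omega> H \<alpha>" using nd unfolding nondegenerate_ground_state_def by simp
  have g1: "omega_bar ix nX \<omega> (lmul ix nX A H) = complex_of_real \<alpha> * \<omega> A" for A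
    using gs unfolding ground_state_def by (elim conjE allE) assumption
  have g2: "complex_of_real \<alpha> * N B \<le> S B B" for B
    using gs unfolding ground_state_def S_def N_def gns_ip_def by (elim conjE allE) assumption
  have ndk: "in_ker ix st nX \<omega> H \<alpha> B \<longleftrightarrow> (\<exists>c. gns_eq st \<omega> B (sc c 1))" for B
    using nd unfolding nondegenerate_ground_state_def by (elim conjE allE) assumption
  have Sreal: "Im (S B B) = 0" for B
  proof -
    have "Im (complex_of_real \<alpha> * N B) = Im (S B B)" using g2[of B] by (simp add: less_eq_complex_def)
    moreover have "Im (N B) = 0" using F_pos(1)[of B] unfolding F_def N_def .
    ultimately show ?thesis by simp
  qed
  have S1: "S 1 C = complex_of_real \<alpha> * cnj (\<omega> C)" for C
    unfolding S_def pi_form_def by (simp add: rmul_one g1 herm)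
  have rhs: "- \<i> * omega_bar ix nX \<omega> (lmul ix nX (st A) (deltaH ix scX nX H A)) = S A A - complex_of_real \<alpha> * N A" for A
    unfolding deltaH_def S_def pi_form_def N_def
    by (simp add: lmul2_sc lmul2_diff ob_sc ob_diff lmul_assoc g1 algebra_simps)
  have gapped_iff: "gapped_ground_state ix st nX \<omega> H \<alpha> \<longleftrightarrow>
     (\<exists>\<Delta>>0. \<forall>A. (\<forall>B. in_ker ix st nX \<omega> H \<alpha> B \<longrightarrow> \<omega> (st B * A) = 0) \<longrightarrow>
        complex_of_real (\<alpha> + \<Delta>) * N A \<le> S A A)"
    unfolding gapped_ground_state_def S_def N_def pi_form_def gns_ip_def using gs by simp
  have ker1: "in_ker ix st nX \<omega> H \<alpha> 1"
  proof -
    have "gns_eq st \<omega> 1 (sc 1 1)" unfolding gns_eq_def gns_ip_def by (simp add: sc_one om_zero)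
    then show ?thesis using ndk by blast
  qed
  show ?thesis
    unfolding rhs gapped_iff
  proof
    assume "\<exists>\<Delta>>0. \<forall>A. (\<forall>B. in_ker ix st nX \<omega> H \<alpha> B \<longrightarrow> \<omega> (st B * A) = 0) \<longrightarrow>
        complex_of_real (\<alpha> + \<Delta>) * N A \<le> S A A"
    then obtain \<Delta> where D: "\<Delta> > 0" and DA: "\<And>A. (\<forall>B. in_ker ix st nX \<omega> H \<alpha> B \<longrightarrow> \<omega> (st B * A) = 0) \<Longrightarrow>
        complex_of_real (\<alpha> + \<Delta>) * N A \<le> S A A" by blast
    have "complex_of_real \<Delta> * (N A - complex_of_real ((cmod (\<omega> A))\<^sup>2)) \<le> S A A - complex_of_real \<alpha> * N A" for A
    proof -
      define c where "c = \<omega> A"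
      define A' where "A' = A - sc c 1"
      have AA: "A = A' + sc c 1" unfolding A'_def by simp
      have wA': "\<omega> A' = 0" unfolding A'_def c_def by (simp add: om_diff om_sc om_one)
      have hyp: "\<forall>B. in_ker ix st nX \<omega> H \<alpha> B \<longrightarrow> \<omega> (st B * A') = 0"
      proof (intro allI impI)
        fix B assume "in_ker ix st nX \<omega> H \<alpha> B"
        then obtain d where "gns_eq st \<omega> B (sc d 1)" using ndk by blast
        then have D0: "\<omega> (st (B - sc d 1) * (B - sc d 1)) = 0" unfolding gns_eq_def gns_ip_def .
        have BB: "B = (B - sc d 1) + sc d 1" by simp
        have "F A' B = F A' (B - sc d 1) + cnj d * F A' 1"
          using F_a2[of A' "B - sc d 1" "sc d 1"] F_s2[of A' d 1] by simp
        also have "\<dots> = 0" unfolding F_def using cs0[OF D0] wA' by (simp add: st_one)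
        finally show "\<omega> (st B * A') = 0" unfolding F_def .
      qed
      have key: "complex_of_real (\<alpha> + \<Delta>) * N A' \<le> S A' A'" by (rule DA[OF hyp])
      have NA: "N A = N A' + cnj c * c"
      proof -
        have "N A = F (A' + sc c 1) (A' + sc c 1)" unfolding N_def F_def using AA by simp
        also have "\<dots> = N A' + cnj c * c" unfolding F_exp unfolding F_def N_def
          by (simp add: st_one om_one herm wA')
        finally show ?thesis .
      qed
      define w where "w = S A' 1"
      have Sexp: "S (A' + sc z 1) (A' + sc z 1) = S A' A' + cnj z * w + cnj z * z * complex_of_real \<alpha>" for z
        unfolding S_def S_exp unfolding S_def[symmetric] w_def[symmetric] S1 by (simp add: wA' om_one)
      have w0: "w = 0"
      proof -
        have "Im (S A' A' + cnj 1 * w + cnj 1 * 1 * complex_of_real \<alpha>) = 0"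
          using Sreal[of "A' + sc 1 1"] Sexp[of 1] by simp
        then have 1: "Im w = 0" using Sreal[of A'] by simp
        have "Im (S A' A' + cnj \<i> * w + cnj \<i> * \<i> * complex_of_real \<alpha>) = 0"
          using Sreal[of "A' + sc \<i> 1"] Sexp[of \<i>] by simp
        then have 2: "Re w = 0" using Sreal[of A'] by simp
        show ?thesis using 1 2 by (simp add: complex_eq_iff)
      qed
      have SA: "S A A = S A' A' + cnj c * c * complex_of_real \<alpha>"
        using Sexp[of c] AA w0 by simp
      have cc: "complex_of_real ((cmod (\<omega> A))\<^sup>2) = cnj c * c"
        unfolding c_def using complex_norm_square[of "\<omega> A"] by (simp only: mult.commute)
      have "complex_of_real \<Delta> * N A' \<le> S A' A' - complex_of_real \<alpha> * N A'"
        using key by (simp add: le_diff_eq algebra_simps)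
      then show ?thesis unfolding cc NA SA by (simp add: algebra_simps)
    qed
    then show "\<exists>\<Delta>>0. \<forall>A. complex_of_real \<Delta> * (\<omega> (st A * A) - complex_of_real ((cmod (\<omega> A))\<^sup>2)) \<le> S A A - complex_of_real \<alpha> * N A"
      using D unfolding N_def by blast
  next
    assume "\<exists>\<Delta>>0. \<forall>A. complex_of_real \<Delta> * (\<omega> (st A * A) - complex_of_real ((cmod (\<omega> A))\<^sup>2)) \<le> S A A - complex_of_real \<alpha> * N A"
    then obtain \<Delta> where D: "\<Delta> > 0" and DA: "\<And>A. complex_of_real \<Delta> * (N A - complex_of_real ((cmod (\<omega> A))\<^sup>2)) \<le> S A A - complex_of_real \<alpha> * N A"
      unfolding N_def by blast
    have "complex_of_real (\<alpha> + \<Delta>) * N A \<le> S A A"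
      if h: "\<forall>B. in_ker ix st nX \<omega> H \<alpha> B \<longrightarrow> \<omega> (st B * A) = 0" for A
    proof -
      have "\<omega> (st 1 * A) = 0" using h ker1 by blast
      then have "\<omega> A = 0" by (simp add: st_one)
      then have "complex_of_real \<Delta> * N A \<le> S A A - complex_of_real \<alpha> * N A" using DA[of A] by simp
      then show ?thesis by (simp add: le_diff_eq algebra_simps)
    qed
    then show "\<exists>\<Delta>>0. \<forall>A. (\<forall>B. in_ker ix st nX \<omega> H \<alpha> B \<longrightarrow> \<omega> (st B * A) = 0) \<longrightarrow>
        complex_of_real (\<alpha> + \<Delta>) * N A \<le> S A A" using D by blast
  qed
qed

end

theorem theorem5p10:
  fixes sc :: "complex \<Rightarrow> 'a::ring_1 \<Rightarrow> 'a" and st :: "'a \<Rightarrow> 'a"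
    and n0 n :: "'a \<Rightarrow> real"
    and ix :: "'a \<Rightarrow> 'x::ab_group_add" and scX :: "complex \<Rightarrow> 'x \<Rightarrow> 'x" and nX :: "'x \<Rightarrow> real"
    and H :: 'x and \<omega> :: "'a \<Rightarrow> complex" and \<alpha> :: real
  assumes "cqstar_setting sc st n0 n ix scX nX"
    and "starX ix st nX H = H"
    and "\<omega> \<in> state_E sc st n"
    and "nondegenerate_ground_state sc ix st nX \<omega> H \<alpha>"
  shows "gapped_ground_state ix st nX \<omega> H \<alpha> \<longleftrightarrow>
    (\<exists>\<Delta>>0. \<forall>A. complex_of_real \<Delta> * (\<omega> (st A * A) - complex_of_real ((cmod (\<omega> A))\<^sup>2))
        \<le> - \<i> * omega_bar ix nX \<omega> (lmul ix nX (st A) (deltaH ix scX nX H A)))"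
proof -
  interpret W: cqsw sc st n0 n ix scX nX \<omega>
    using assms(1,3) by (simp add: cqsw_def cqs_def cqsw_axioms_def)
  show ?thesis by (rule W.main[OF assms(4)])
qed

end
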